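(* Let $X$ be a topological space, $x \in X$, and let $F$ be a strategy for player II in the game $\mathsf{G}_1(\Omega_x, \Omega_x)$. Then for every finite sequence $D_0, \dots, D_n$ of elements of $\Omega_x$ there is an open set $A$ with $x \in A$ such that for every $a \in A \setminus \{x\}$ there is $D_a \in \Omega_x$ with $F(D_0, \dots, D_n, D_a) = a$.
   Context: For a point $x$ of a space $X$, $\Omega_x$ denotes the collection of all sets $A \subset X$ such that $x \notin A$ and $x \in \overline{A}$. The game $\mathsf{G}_1(\Omega_x,\Omega_x)$ is played in innings $n \in \omega$: in inning $n$ player I chooses $A_n \in \Omega_x$ and then player II chooses $a_n \in A_n$; player II wins if $\{a_n : n \in \omega\} \in \Omega_x$. A strategy for player II is a function $F$ assigning to each finite nonempty sequence $(D_0,\dots,D_n)$ of elements of $\Omega_x$ a point $F(D_0,\dots,D_n) \in D_n$. *)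

theory Defs
  imports "HOL-Analysis.Analysis"
begin

definition Omega_pt :: "'a topology \<Rightarrow> 'a \<Rightarrow> 'a set set" where
  "Omega_pt X x = {A. A \<subseteq> topspace X \<and> x \<notin> A \<and> x \<in> X closure_of A}"

definition strategy_II :: "'a topology \<Rightarrow> 'a \<Rightarrow> ('a set list \<Rightarrow> 'a) \<Rightarrow> bool" where
  "strategy_II X x F \<longleftrightarrow>
     (\<forall>Ds. Ds \<noteq> [] \<and> set Ds \<subseteq> Omega_pt X x \<longrightarrow> F Ds \<in> last Ds)"

end

theory Submission
  imports Defs
begin

theorem lemma2p3:
  fixes X :: "'a topology" and x :: 'a and F :: "'a set list \<Rightarrow> 'a"
  assumes "x \<in> topspace X"
    and "strategy_II X x F"
    and "Ds \<noteq> []" and "set Ds \<subseteq> Omega_pt X x"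
  shows "\<exists>A. openin X A \<and> x \<in> A \<and>
           (\<forall>a \<in> A - {x}. \<exists>D \<in> Omega_pt X x. F (Ds @ [D]) = a)"
proof (rule ccontr)
  assume H: "\<not> ?thesis"
  define B where "B = {a \<in> topspace X - {x}. \<forall>D \<in> Omega_pt X x. F (Ds @ [D]) \<noteq> a}"
  have "x \<in> X closure_of B"
    unfolding in_closure_of
  proof (intro conjI allI impI assms(1))
    fix T assume T: "x \<in> T \<and> openin X T"
    then obtain a where "a \<in> T - {x}" "\<forall>D \<in> Omega_pt X x. F (Ds @ [D]) \<noteq> a"
      using H by blast
    moreover have "a \<in> topspace X" using T calculation(1) openin_subset by blast
    ultimately show "\<exists>y. y \<in> B \<and> y \<in> T" unfolding B_def by blast
  qed
  hence BO: "B \<in> Omega_pt X x" unfolding Omega_pt_def B_def by auto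
  have "F (Ds @ [B]) \<in> B"
  proof -
    have "set (Ds @ [B]) \<subseteq> Omega_pt X x" using BO assms(4) by simp
    moreover have "Ds @ [B] \<noteq> []" by simp
    ultimately have "F (Ds @ [B]) \<in> last (Ds @ [B])"
      using assms(2) unfolding strategy_II_def by blast
    thus ?thesis by simp
  qed
  thus False using BO unfolding B_def by blast
qed

end
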